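(* For $g\in GL_d(\mathbb{Q})$ and $R\ge0$ let $B(g,R)=\{h\in GL_d(\mathbb{Q}) : d(g,h)\le R\}$. Then there exists a constant $C>0$ such that for all $g\in GL_d(\mathbb{Q})$ and all $R\ge0$, $|B(g,R)|\le Ce^{CR}$.
   Context: $\mathcal{P}$ is the set of primes together with $\infty$; $\mathbb{Q}_\infty=\mathbb{R}$. For $v\in\mathbb{Q}_p^d$, $|v|_p=\max_i|v_i|_p$ if $p$ prime ($|\cdot|_p$ the $p$-adic absolute value) and the Euclidean norm if $p=\infty$; $\|g\|_p=\sup_{|v|_p=1}|gv|_p$. $d_p(g,h)=\ln^+\|g^{-1}h\|_p+\ln^+\|h^{-1}g\|_p$ and, for $g,h\in GL_d(\mathbb{Q})$, $d(g,h)=\sum_{p\in\mathcal{P}}d_p(g,h)$. $|\cdot|$ denotes cardinality. *)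

theory Defs
  imports "HOL-Analysis.Analysis" "HOL-Computational_Algebra.Primes"
begin

datatype place = Arch | Fin nat

definition places :: "place set" where
  "places = insert Arch (Fin ` {p. prime p})"

definition padic_abs :: "nat \<Rightarrow> rat \<Rightarrow> real" where
  "padic_abs p x = (if x = 0 then 0 else
     (case quotient_of x of (a, b) \<Rightarrow>
        real p powr (real (multiplicity (int p) b) - real (multiplicity (int p) a))))"

definition padic_vnorm :: "nat \<Rightarrow> rat^'n \<Rightarrow> real" where
  "padic_vnorm p v = Max (range (\<lambda>i. padic_abs p (v $ i)))"

text \<open>Operator norm of a rational matrix at a place.  At infinity: sup over real
  Euclidean unit vectors; at a prime p: sup over (rational, dense in Q_p^d) vectors
  of p-adic max norm 1.\<close>
fun opnorm :: "place \<Rightarrow> rat^'n^'n \<Rightarrow> real" where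
  "opnorm Arch g =
     Sup {norm ((\<chi> i j. real_of_rat (g $ i $ j)) *v v) | v :: real^'n. norm v = 1}"
| "opnorm (Fin p) g =
     Sup {padic_vnorm p (g *v v) | v :: rat^'n. padic_vnorm p v = 1}"

definition lnp :: "real \<Rightarrow> real" where
  "lnp x = max 0 (ln x)"

definition dist_place :: "place \<Rightarrow> rat^'n^'n \<Rightarrow> rat^'n^'n \<Rightarrow> real" where
  "dist_place w g h = lnp (opnorm w (matrix_inv g ** h)) + lnp (opnorm w (matrix_inv h ** g))"

definition dGL :: "rat^'n^'n \<Rightarrow> rat^'n^'n \<Rightarrow> real" where
  "dGL g h = (\<Sum>\<^sub>\<infinity> w\<in>places. dist_place w g h)"

definition GLball :: "rat^'n^'n \<Rightarrow> real \<Rightarrow> (rat^'n^'n) set" where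
  "GLball g R = {h. invertible h \<and> dGL g h \<le> R}"

end

theory Submission imports Defs begin

lemma padic_abs_nonneg: "padic_abs p x \<ge> 0"
  unfolding padic_abs_def by (auto split: prod.split)

lemma padic_abs_one: "p > 0 \<Longrightarrow> padic_abs p 1 = 1"
  unfolding padic_abs_def by simp

lemma padic_abs_zero: "padic_abs p 0 = 0"
  unfolding padic_abs_def by simp

lemma padic_abs_repr:
  assumes p: "prime p" and a: "a \<noteq> 0" and b: "b \<noteq> 0" and x: "x = of_int a / of_int b"
  shows "padic_abs p x = real p powr (real (multiplicity (int p) b) - real (multiplicity (int p) a))"
proof -
  obtain a0 b0 where q: "quotient_of x = (a0, b0)" by (cases "quotient_of x")
  have x0: "x = of_int a0 / of_int b0" using quotient_of_div[OF q] .
  have b0: "b0 > 0" using quotient_of_denom_pos[OF q] .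
  have xn: "x \<noteq> 0" using x a b by simp
  have a0: "a0 \<noteq> 0" using xn x0 by auto
  have "of_int a0 * of_int b = (of_int a * of_int b0 :: rat)"
    using x x0 b b0 by (simp add: field_simps)
  hence e: "a0 * b = a * b0" by (metis of_int_eq_iff of_int_mult)
  have pp: "prime_elem (int p)" using p by simp
  have "multiplicity (int p) (a0 * b) = multiplicity (int p) (a * b0)" using e by simp
  hence "multiplicity (int p) a0 + multiplicity (int p) b = multiplicity (int p) a + multiplicity (int p) b0"
    using prime_elem_multiplicity_mult_distrib[OF pp] a0 b a b0 by simp
  hence "real (multiplicity (int p) b0) - real (multiplicity (int p) a0) =
         real (multiplicity (int p) b) - real (multiplicity (int p) a)" by linarith
  thus ?thesis using q xn unfolding padic_abs_def by simp
qed

definition inZ :: "nat \<Rightarrow> nat \<Rightarrow> rat \<Rightarrow> bool" where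
  "inZ p m x \<longleftrightarrow> (\<exists>a b. b \<noteq> 0 \<and> \<not> int p dvd b \<and> x = of_int a / (of_int b * of_nat p ^ m))"

lemma inZ_bound:
  assumes p: "prime p" and z: "inZ p m x"
  shows "padic_abs p x \<le> real p ^ m"
proof -
  obtain a b where ab: "b \<noteq> 0" "\<not> int p dvd b" "x = of_int a / (of_int b * of_nat p ^ m)"
    using z unfolding inZ_def by blast
  show ?thesis
  proof (cases "a = 0")
    case True thus ?thesis using ab by (simp add: padic_abs_zero)
  next
    case False
    have p1: "real p > 1" using p prime_gt_1_nat by auto
    have pp: "prime_elem (int p)" using p by simp
    have bn: "b * int p ^ m \<noteq> 0" using ab p by (simp add: prime_gt_0_nat)
    have x: "x = of_int a / of_int (b * int p ^ m)" using ab by simp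
    have "multiplicity (int p) (b * int p ^ m) = multiplicity (int p) b + multiplicity (int p) (int p ^ m)"
      using prime_elem_multiplicity_mult_distrib[OF pp] ab p by (simp add: prime_gt_0_nat)
    also have "\<dots> = m" using ab pp not_dvd_imp_multiplicity_0[of "int p" b]
      by (simp add: multiplicity_same_power prime_elem_not_unit)
    finally have mm: "multiplicity (int p) (b * int p ^ m) = m" .
    have "padic_abs p x = real p powr (real m - real (multiplicity (int p) a))"
      using padic_abs_repr[OF p False bn x] mm by simp
    also have "\<dots> \<le> real p powr real m" using p1 by (intro powr_mono) auto
    also have "\<dots> = real p ^ m" using p1 by (simp add: powr_realpow)
    finally show ?thesis .
  qed
qed

lemma inZ_of_bound:
  assumes p: "prime p" and bd: "padic_abs p x \<le> real p ^ m"
  shows "inZ p m x"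
proof (cases "x = 0")
  case True
  have "\<not> int p dvd 1" using p by (metis int_ops(2) int_dvd_int_iff not_prime_unit)
  thus ?thesis unfolding inZ_def using True by (intro exI[of _ 0] exI[of _ 1]) simp
next
  case xn: False
  obtain a0 b0 where q: "quotient_of x = (a0, b0)" by (cases "quotient_of x")
  have x0: "x = of_int a0 / of_int b0" using quotient_of_div[OF q] .
  have b0: "b0 > 0" using quotient_of_denom_pos[OF q] .
  have cop: "coprime a0 b0" using quotient_of_coprime[OF q] .
  have p1: "real p > 1" using p prime_gt_1_nat by auto
  have pp: "prime (int p)" using p by simp
  define va where "va = multiplicity (int p) a0"
  define vb where "vb = multiplicity (int p) b0"
  have "real p powr (real vb - real va) \<le> real p powr real m"
    using bd q xn p1 unfolding padic_abs_def va_def vb_def by (simp add: powr_realpow)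
  hence le: "real vb - real va \<le> real m" using p1 by simp
  have vbm: "vb \<le> m"
  proof (cases "vb = 0")
    case False
    hence "int p dvd b0" unfolding vb_def
      by (metis not_dvd_imp_multiplicity_0)
    hence "\<not> int p dvd a0" using cop pp
      by (metis coprime_common_divisor not_prime_unit)
    hence "va = 0" unfolding va_def by (simp add: not_dvd_imp_multiplicity_0)
    thus ?thesis using le by linarith
  qed simp
  obtain b' where b': "b0 = int p ^ vb * b'" "\<not> int p dvd b'"
    using multiplicity_decompose'[of b0 "int p"] b0 pp unfolding vb_def
    by (metis less_irrefl not_prime_unit)
  have bn: "b' \<noteq> 0" using b' b0 by auto
  have "x = of_int (a0 * int p ^ (m - vb)) / (of_int b' * of_nat p ^ m)"
  proof -
    have "(of_nat p :: rat) ^ m = of_nat p ^ vb * of_nat p ^ (m - vb)"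
      using vbm by (simp add: power_add[symmetric])
    thus ?thesis using x0 b' bn p by (simp add: field_simps prime_gt_0_nat)
  qed
  thus ?thesis unfolding inZ_def using bn b' by blast
qed

lemma inZ_zero: assumes p: "prime p" shows "inZ p m 0"
proof -
  have "\<not> int p dvd 1" using p by (metis int_ops(2) int_dvd_int_iff not_prime_unit)
  thus ?thesis unfolding inZ_def by (intro exI[of _ 0] exI[of _ 1]) simp
qed

lemma inZ_add:
  assumes p: "prime p" and x: "inZ p m x" and y: "inZ p m y"
  shows "inZ p m (x + y)"
proof -
  obtain a b where ab: "b \<noteq> 0" "\<not> int p dvd b" "x = of_int a / (of_int b * of_nat p ^ m)"
    using x unfolding inZ_def by blast
  obtain c d where cd: "d \<noteq> 0" "\<not> int p dvd d" "y = of_int c / (of_int d * of_nat p ^ m)"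
    using y unfolding inZ_def by blast
  have pn: "(of_nat p :: rat) ^ m \<noteq> 0" using p by (simp add: prime_gt_0_nat)
  have "x + y = of_int (a * d + c * b) / (of_int (b * d) * of_nat p ^ m)"
    unfolding ab(3) cd(3) using ab cd pn by (simp add: field_simps)
  moreover have "\<not> int p dvd b * d" using ab cd p
    by (simp add: prime_dvd_mult_iff)
  moreover have "b * d \<noteq> 0" using ab cd by simp
  ultimately show ?thesis unfolding inZ_def by blast
qed

lemma inZ_mult:
  assumes p: "prime p" and x: "inZ p m x" and y: "inZ p 0 y"
  shows "inZ p m (x * y)"
proof -
  obtain a b where ab: "b \<noteq> 0" "\<not> int p dvd b" "x = of_int a / (of_int b * of_nat p ^ m)"
    using x unfolding inZ_def by blast
  obtain c d where cd: "d \<noteq> 0" "\<not> int p dvd d" "y = of_int c / (of_int d * of_nat p ^ 0)"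
    using y unfolding inZ_def by blast
  have pn: "(of_nat p :: rat) ^ m \<noteq> 0" using p by (simp add: prime_gt_0_nat)
  have "x * y = of_int (a * c) / (of_int (b * d) * of_nat p ^ m)"
    unfolding ab(3) cd(3) using ab cd pn by simp
  moreover have "\<not> int p dvd b * d" using ab cd p
    by (simp add: prime_dvd_mult_iff)
  moreover have "b * d \<noteq> 0" using ab cd by simp
  ultimately show ?thesis unfolding inZ_def by blast
qed

lemma inZ_sum:
  assumes p: "prime p" and "finite A" and "\<And>i. i \<in> A \<Longrightarrow> inZ p m (f i)"
  shows "inZ p m (\<Sum>i\<in>A. f i)"
  using assms(2,3) by (induction A rule: finite_induct) (auto intro: inZ_add inZ_zero p)


definition Mk :: "nat \<Rightarrow> rat^'n^'n \<Rightarrow> nat" where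
  "Mk p k = Max ((\<lambda>(i,j). multiplicity (int p) (snd (quotient_of (k$i$j)))) ` UNIV)"

lemma entry_bound:
  assumes p: "prime p"
  shows "padic_abs p (k$i$j) \<le> real p ^ Mk p k"
proof (cases "k$i$j = 0")
  case True thus ?thesis by (simp add: padic_abs_zero)
next
  case False
  obtain a b where q: "quotient_of (k$i$j) = (a, b)" by (cases "quotient_of (k$i$j)")
  have p1: "real p > 1" using p prime_gt_1_nat by auto
  have "multiplicity (int p) b \<le> Mk p k" unfolding Mk_def
    by (rule Max_ge) (auto simp: q intro!: image_eqI[of _ _ "(i,j)"])
  hence "padic_abs p (k$i$j) \<le> real p powr real (Mk p k)"
    using False q p1 unfolding padic_abs_def by (auto intro!: powr_mono)
  thus ?thesis using p1 by (simp add: powr_realpow)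
qed

lemma vnorm_ge: "padic_abs p (v$j) \<le> padic_vnorm p v"
  unfolding padic_vnorm_def by (rule Max_ge) auto

lemma vnorm_le: "(\<And>j. padic_abs p (v$j) \<le> c) \<Longrightarrow> padic_vnorm p v \<le> c"
  unfolding padic_vnorm_def by (subst Max_le_iff) auto

lemma mv_bound:
  assumes p: "prime p" and v: "padic_vnorm p v = 1"
  shows "padic_vnorm p (k *v v) \<le> real p ^ Mk p k"
proof (rule vnorm_le)
  fix i
  have "inZ p (Mk p k) (\<Sum>j\<in>UNIV. k$i$j * v$j)"
  proof (rule inZ_sum[OF p], simp)
    fix j
    have "inZ p 0 (v$j)" using inZ_of_bound[OF p] vnorm_ge[of p v j] v by simp
    thus "inZ p (Mk p k) (k$i$j * v$j)"
      by (rule inZ_mult[OF p inZ_of_bound[OF p entry_bound[OF p]]])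
  qed
  thus "padic_abs p ((k *v v)$i) \<le> real p ^ Mk p k"
    using inZ_bound[OF p] by (simp add: matrix_vector_mult_def)
qed

lemma vnorm_ones: "prime p \<Longrightarrow> padic_vnorm p (\<chi> i. 1) = 1"
  unfolding padic_vnorm_def by (simp add: padic_abs_one prime_gt_0_nat)

lemma vnorm_axis: "prime p \<Longrightarrow> padic_vnorm p (axis j 1) = 1"
proof -
  assume p: "prime p"
  have "padic_vnorm p (axis j 1) \<le> 1"
    by (rule vnorm_le) (auto simp: axis_def padic_abs_one padic_abs_zero p prime_gt_0_nat)
  moreover have "padic_abs p (axis j 1 $ j) \<le> padic_vnorm p (axis j 1)" by (rule vnorm_ge)
  ultimately show ?thesis by (simp add: padic_abs_one p prime_gt_0_nat)
qed

lemma mv_axis: "(k *v axis j 1) $ i = k$i$j"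
  by (simp add: matrix_vector_mult_def axis_def if_distrib cong: if_cong)

lemma opnorm_Fin_bdd:
  fixes k :: "rat^'n^'n"
  assumes p: "prime p"
  shows "bdd_above {padic_vnorm p (k *v v) | v :: rat^'n. padic_vnorm p v = 1}"
  using mv_bound[OF p] by (auto simp: bdd_above_def intro!: exI[of _ "real p ^ Mk p k"])

lemma opnorm_Fin_le:
  assumes p: "prime p"
  shows "opnorm (Fin p) k \<le> real p ^ Mk p k"
  unfolding opnorm.simps
  by (rule cSup_least) (use vnorm_ones[OF p] mv_bound[OF p] in auto)

lemma opnorm_Fin_ge:
  assumes p: "prime p"
  shows "padic_abs p (k$i$j) \<le> opnorm (Fin p) k"
proof -
  have "padic_abs p (k$i$j) \<le> padic_vnorm p (k *v axis j 1)"
    using vnorm_ge[of p "k *v axis j 1" i] by (simp add: mv_axis)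
  also have "\<dots> \<le> opnorm (Fin p) k"
    unfolding opnorm.simps
    by (rule cSup_upper) (use vnorm_axis[OF p] opnorm_Fin_bdd[OF p] in auto)
  finally show ?thesis .
qed

lemma opnorm_Arch_ge:
  fixes k :: "rat^'n^'n"
  shows "\<bar>real_of_rat (k$i$j)\<bar> \<le> opnorm Arch k"
proof -
  define A where "A = (\<chi> i j. real_of_rat (k $ i $ j))"
  have rw: "(A *v axis j 1) $ i = real_of_rat (k$i$j)"
    by (simp add: A_def matrix_vector_mult_def axis_def if_distrib cong: if_cong)
  obtain K where K: "\<And>x. norm (A *v x) \<le> norm x * K"
    using bounded_linear.bounded[OF matrix_vector_mul_bounded_linear[of A]] by blast
  have "\<bar>real_of_rat (k$i$j)\<bar> \<le> norm (A *v axis j 1)"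
    using component_le_norm_cart[of "A *v axis j 1" i] rw by simp
  also have "\<dots> \<le> opnorm Arch k"
    unfolding opnorm.simps A_def[symmetric]
    by (rule cSup_upper) (use K in \<open>auto simp: bdd_above_def intro!: exI[of _ "axis j 1"] exI[of _ K], metis mult_1\<close>)
  finally show ?thesis .
qed


lemma lnp_nonneg: "lnp x \<ge> 0" unfolding lnp_def by simp

lemma lnp_zero: "0 \<le> x \<Longrightarrow> x \<le> 1 \<Longrightarrow> lnp x = 0"
  unfolding lnp_def by (cases "x = 0") auto

lemma lnp_ge_ln: assumes "0 < y" "y \<le> x" shows "ln y \<le> lnp x"
proof -
  have "ln y \<le> ln x" using assms by (subst ln_le_cancel_iff) auto
  thus ?thesis unfolding lnp_def by simp
qed

lemma dist_place_nonneg: "dist_place w g h \<ge> 0"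
  unfolding dist_place_def using lnp_nonneg by (simp add: add_nonneg_nonneg)

lemma opnorm_Fin_nonneg: "prime p \<Longrightarrow> 0 \<le> opnorm (Fin p) k"
  using opnorm_Fin_ge[of p k undefined undefined] padic_abs_nonneg order_trans by blast

definition Dk :: "rat^'n^'n \<Rightarrow> nat" where
  "Dk k = Max ((\<lambda>(i,j). nat (snd (quotient_of (k$i$j)))) ` UNIV)"

lemma Mk_zero:
  assumes p: "prime p" and "Dk k < p"
  shows "Mk p k = 0"
proof (rule ccontr)
  assume "Mk p k \<noteq> 0"
  hence "Mk p k \<in> ((\<lambda>(i,j). multiplicity (int p) (snd (quotient_of (k$i$j)))) ` UNIV)"
    unfolding Mk_def by (intro Max_in) auto
  then obtain i j where ij: "Mk p k = multiplicity (int p) (snd (quotient_of (k$i$j)))" by auto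
  define b where "b = snd (quotient_of (k$i$j))"
  have b0: "b > 0" unfolding b_def by (rule quotient_of_denom_pos')
  have "multiplicity (int p) b > 0" using ij \<open>Mk p k \<noteq> 0\<close> b_def by simp
  hence "int p dvd b" using p b0 by (simp add: prime_multiplicity_gt_zero_iff)
  hence "int p \<le> b" using b0 by (simp add: zdvd_imp_le)
  moreover have "nat b \<le> Dk k" unfolding Dk_def b_def
    by (rule Max_ge) (auto intro!: image_eqI[of _ _ "(i,j)"])
  ultimately show False using assms(2) by linarith
qed

lemma opnorm_Fin_small:
  assumes p: "prime p" and "Dk k < p"
  shows "lnp (opnorm (Fin p) k) = 0"
  using opnorm_Fin_le[OF p, of k] Mk_zero[OF assms] opnorm_Fin_nonneg[OF p]
  by (intro lnp_zero) auto

lemma dist_summable: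
  fixes g h :: "rat^'n^'n"
  shows "(\<lambda>w. dist_place w g h) summable_on places"
proof -
  define F where "F = places \<inter> insert Arch (Fin ` {..max (Dk (matrix_inv g ** h)) (Dk (matrix_inv h ** g))})"
  have fin: "finite F" unfolding F_def by auto
  have "(\<lambda>w. dist_place w g h) summable_on F" using fin by simp
  moreover have "dist_place w g h = 0" if "w \<in> places - F" for w
  proof -
    have w1: "w \<in> places" "w \<notin> F" using that by auto
    obtain p where wp: "w = Fin p" "prime p" using w1 unfolding places_def F_def by auto
    have "\<not> p \<le> max (Dk (matrix_inv g ** h)) (Dk (matrix_inv h ** g))"
      using w1 wp unfolding F_def by auto
    hence w: "w = Fin p" "prime p" "p > Dk (matrix_inv g ** h)" "p > Dk (matrix_inv h ** g)"
      using wp by auto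
    show ?thesis unfolding dist_place_def w(1)
      using opnorm_Fin_small[OF w(2) w(3)] opnorm_Fin_small[OF w(2) w(4)] by simp
  qed
  moreover have "((\<lambda>w. dist_place w g h) summable_on places) \<longleftrightarrow> ((\<lambda>w. dist_place w g h) summable_on F)"
    by (rule summable_on_cong_neutral) (use calculation(2) in \<open>auto simp: F_def\<close>)
  ultimately show ?thesis by blast
qed

lemma dGL_ge:
  fixes g h :: "rat^'n^'n"
  assumes "finite T" "T \<subseteq> places"
  shows "(\<Sum>w\<in>T. dist_place w g h) \<le> dGL g h"
proof -
  have "(\<Sum>w\<in>T. dist_place w g h) = infsum (\<lambda>w. dist_place w g h) T" using assms by simp
  also have "\<dots> \<le> dGL g h" unfolding dGL_def
    by (rule infsum_mono2) (use assms dist_summable dist_place_nonneg in auto)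
  finally show ?thesis .
qed

lemma entry_arch:
  fixes g h :: "rat^'n^'n"
  shows "\<bar>real_of_rat ((matrix_inv g ** h)$i$j)\<bar> \<le> exp (dGL g h)"
proof (cases "(matrix_inv g ** h)$i$j = 0")
  case False
  let ?x = "\<bar>real_of_rat ((matrix_inv g ** h)$i$j)\<bar>"
  have "ln ?x \<le> lnp (opnorm Arch (matrix_inv g ** h))"
    using False by (intro lnp_ge_ln opnorm_Arch_ge) auto
  also have "\<dots> \<le> dist_place Arch g h" unfolding dist_place_def using lnp_nonneg by simp
  also have "\<dots> \<le> dGL g h" using dGL_ge[of "{Arch}" g h] by (simp add: places_def)
  finally show ?thesis using False by (metis exp_ln_iff abs_ge_zero exp_le_cancel_iff exp_ln zero_less_abs_iff of_rat_eq_0_iff)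
qed simp

lemma entry_denom:
  fixes g h :: "rat^'n^'n"
  assumes q: "quotient_of ((matrix_inv g ** h)$i$j) = (a, b)"
  shows "real_of_int b \<le> exp (dGL g h)"
proof -
  let ?k = "matrix_inv g ** h"
  have b0: "b > 0" using quotient_of_denom_pos[OF q] .
  have cop: "coprime a b" using quotient_of_coprime[OF q] .
  have x: "?k$i$j = of_int a / of_int b" using quotient_of_div[OF q] .
  define P where "P = prime_factors b"
  have finP: "finite P" unfolding P_def by simp
  have Ppos: "\<And>q. q \<in> P \<Longrightarrow> q > 0 \<and> prime q \<and> q dvd b"
    unfolding P_def using prime_gt_0_int by auto
  have "real_of_int b = real_of_int (\<Prod>q\<in>P. q ^ multiplicity q b)"
    unfolding P_def using prod_prime_factors[of b] b0 by simp
  hence "ln (real_of_int b) = (\<Sum>q\<in>P. ln (real_of_int q ^ multiplicity q b))"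
    using finP Ppos by (simp add: ln_prod)
  also have "\<dots> \<le> (\<Sum>q\<in>P. dist_place (Fin (nat q)) g h)"
  proof (rule sum_mono)
    fix q assume qP: "q \<in> P"
    have qpos: "q > 0" and qpr: "prime q" and qd: "q dvd b" using Ppos[OF qP] by auto
    define p where "p = nat q"
    have pq: "int p = q" using qpos p_def by simp
    have p: "prime p" using qpr pq by (metis prime_nat_int_transfer)
    have an: "\<not> q dvd a" using cop qd qpr by (metis coprime_common_divisor not_prime_unit)
    have a0: "a \<noteq> 0" using an by auto
    have ma: "multiplicity q a = 0" using an by (simp add: not_dvd_imp_multiplicity_0)
    have "padic_abs p (?k$i$j) = real p powr real (multiplicity q b)"
      using padic_abs_repr[OF p a0 _ x] b0 ma pq by simp
    also have "\<dots> = real_of_int q ^ multiplicity q b"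
      using pq p prime_gt_0_nat by (simp add: powr_realpow flip: pq)
    finally have e: "padic_abs p (?k$i$j) = real_of_int q ^ multiplicity q b" .
    have "ln (real_of_int q ^ multiplicity q b) \<le> lnp (opnorm (Fin p) ?k)"
      using e opnorm_Fin_ge[OF p, of ?k i j] qpos by (intro lnp_ge_ln) auto
    also have "\<dots> \<le> dist_place (Fin p) g h" unfolding dist_place_def using lnp_nonneg by simp
    finally show "ln (real_of_int q ^ multiplicity q b) \<le> dist_place (Fin (nat q)) g h"
      unfolding p_def .
  qed
  also have "\<dots> = (\<Sum>w\<in>(\<lambda>q. Fin (nat q)) ` P. dist_place w g h)"
  proof (rule sum.reindex[symmetric, unfolded comp_def])
    show "inj_on (\<lambda>q. Fin (nat q)) P"
      by (rule inj_onI) (metis Ppos eq_nat_nat_iff less_le place.inject)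
  qed
  also have "\<dots> \<le> dGL g h"
  proof (rule dGL_ge)
    show "finite ((\<lambda>q. Fin (nat q)) ` P)" using finP by simp
    show "(\<lambda>q. Fin (nat q)) ` P \<subseteq> places" unfolding places_def
      using Ppos by (auto simp: prime_nat_iff_prime)
  qed
  finally show ?thesis using b0 by (metis exp_le_cancel_iff exp_ln of_int_0_less_iff)
qed


definition QR :: "real \<Rightarrow> rat set" where
  "QR R = (\<lambda>(a,b). of_int a / of_int b) ` ({-\<lfloor>exp (2*R)\<rfloor>..\<lfloor>exp (2*R)\<rfloor>} \<times> {1..\<lfloor>exp (2*R)\<rfloor>})"

lemma QR_finite: "finite (QR R)" unfolding QR_def by simp

lemma QR_card: "R \<ge> 0 \<Longrightarrow> real (card (QR R)) \<le> 3 * exp (4 * R)"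
proof -
  assume R: "R \<ge> 0"
  define N where "N = \<lfloor>exp (2*R)\<rfloor>"
  have e1: "exp (2*R) \<ge> 1" using R by simp
  have N1: "N \<ge> 1" unfolding N_def using e1 by (simp add: le_floor_iff)
  have NN: "real_of_int N \<le> exp (2*R)" unfolding N_def by simp
  have "card (QR R) \<le> card ({-N..N} \<times> {1..N})" unfolding QR_def N_def by (rule card_image_le) simp
  also have "\<dots> = nat (2*N+1) * nat N" by (simp add: card_cartesian_product)
  finally have "real (card (QR R)) \<le> real (nat (2*N+1) * nat N)" by linarith
  also have "\<dots> = (2 * real_of_int N + 1) * real_of_int N" using N1 by simp
  also have "\<dots> \<le> 3 * real_of_int N * real_of_int N" using N1 by (simp add: algebra_simps)
  also have "\<dots> \<le> 3 * exp (2*R) * exp (2*R)" using NN N1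
    by (intro mult_mono) auto
  also have "\<dots> = 3 * exp (4*R)" by (simp add: mult_exp_exp)
  finally show ?thesis .
qed

lemma entry_in_QR:
  fixes g h :: "rat^'n^'n"
  assumes d: "dGL g h \<le> R"
  shows "(matrix_inv g ** h)$i$j \<in> QR R"
proof -
  obtain a b where q: "quotient_of ((matrix_inv g ** h)$i$j) = (a, b)"
    by (cases "quotient_of ((matrix_inv g ** h)$i$j)")
  have b0: "b > 0" using quotient_of_denom_pos[OF q] .
  have x: "(matrix_inv g ** h)$i$j = of_int a / of_int b" using quotient_of_div[OF q] .
  have ed: "exp (dGL g h) \<le> exp R" using d by simp
  have bR: "real_of_int b \<le> exp R" using entry_denom[OF q] ed by linarith
  have rx: "real_of_rat ((matrix_inv g ** h)$i$j) = real_of_int a / real_of_int b"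
    by (simp add: x of_rat_divide)
  have xR: "\<bar>real_of_int a / real_of_int b\<bar> \<le> exp R"
    using entry_arch[of g h i j] ed unfolding rx by linarith
  have "\<bar>real_of_int a\<bar> = \<bar>real_of_int a / real_of_int b\<bar> * real_of_int b" using b0 by (simp add: abs_divide)
  also have "\<dots> \<le> exp R * exp R" using xR bR b0 by (intro mult_mono) auto
  also have "\<dots> = exp (2*R)" by (simp add: mult_exp_exp)
  finally have aR: "\<bar>real_of_int a\<bar> \<le> exp (2*R)" .
  have "exp R \<le> exp (2*R)" using order_trans[OF dGL_ge[of "{}" g h] d] by simp
  hence bR2: "real_of_int b \<le> exp (2*R)" using bR by linarith
  have "a \<le> \<lfloor>exp (2*R)\<rfloor>" using aR by (simp add: le_floor_iff)
  moreover have "-a \<le> \<lfloor>exp (2*R)\<rfloor>" using aR by (simp add: le_floor_iff)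
  ultimately have "a \<in> {-\<lfloor>exp (2*R)\<rfloor>..\<lfloor>exp (2*R)\<rfloor>}" by simp
  moreover have "b \<in> {1..\<lfloor>exp (2*R)\<rfloor>}" using bR2 b0 by (simp add: le_floor_iff)
  ultimately show ?thesis unfolding QR_def x by (auto intro!: image_eqI[of _ _ "(a,b)"])
qed


lemma matrix_inv_cancel:
  fixes g :: "rat^'n^'n"
  assumes "invertible g"
  shows "g ** (matrix_inv g ** h) = h"
proof -
  have "g ** matrix_inv g = mat 1 \<and> matrix_inv g ** g = mat 1"
    unfolding matrix_inv_def using assms unfolding invertible_def by (rule someI_ex)
  thus ?thesis by (simp add: matrix_mul_assoc)
qed

lemma MS_card:
  fixes Q :: "rat set"
  assumes "finite Q"
  shows "finite {k :: rat^'n^'n. \<forall>i j. k$i$j \<in> Q} \<and>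
         card {k :: rat^'n^'n. \<forall>i j. k$i$j \<in> Q} \<le> card Q ^ (CARD('n) * CARD('n))"
proof -
  define MS where "MS = {k :: rat^'n^'n. \<forall>i j. k$i$j \<in> Q}"
  define \<phi> where "\<phi> = (\<lambda>(k :: rat^'n^'n). \<lambda>(i::'n, j::'n). k$i$j)"
  have inj: "inj \<phi>"
    by (rule injI) (simp add: \<phi>_def vec_eq_iff fun_eq_iff)
  have sub: "\<phi> ` MS \<subseteq> PiE UNIV (\<lambda>_. Q)" unfolding MS_def \<phi>_def by auto
  have finP: "finite (PiE (UNIV :: ('n \<times> 'n) set) (\<lambda>_. Q))" using assms by (simp add: finite_PiE)
  have fin: "finite MS" using finite_imageD[OF finite_subset[OF sub finP]] inj inj_on_subset by blast
  have "card MS = card (\<phi> ` MS)" using inj by (simp add: card_image inj_on_subset)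
  also have "\<dots> \<le> card (PiE (UNIV :: ('n \<times> 'n) set) (\<lambda>_. Q))" by (rule card_mono[OF finP sub])
  also have "\<dots> = card Q ^ (CARD('n) * CARD('n))" by (simp add: card_PiE card_cartesian_product)
  finally show ?thesis using fin unfolding MS_def by simp
qed

theorem lemma4p2:
  shows "\<exists>C::real. C > 0 \<and>
    (\<forall>(g :: rat^'n^'n) (R::real). invertible g \<longrightarrow> R \<ge> 0 \<longrightarrow>
       finite (GLball g R) \<and> real (card (GLball g R)) \<le> C * exp (C * R))"
proof -
  define D where "D = CARD('n) * CARD('n)"
  define C :: real where "C = 3 ^ D * (4 * real D)"
  have D1: "D \<ge> 1" unfolding D_def by (simp add: Suc_le_eq)
  have C1: "3 ^ D \<le> C" unfolding C_def using D1 by simp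
  have C2: "4 * real D \<le> C" unfolding C_def using D1 by simp
  have Cpos: "C > 0" unfolding C_def using D1 by simp
  show ?thesis
  proof (intro exI[of _ C] conjI allI impI)
    fix g :: "rat^'n^'n" and R :: real
    assume g: "invertible g" and R: "R \<ge> 0"
    define MS where "MS = {k :: rat^'n^'n. \<forall>i j. k$i$j \<in> QR R}"
    have ms: "finite MS" "card MS \<le> card (QR R) ^ D"
      using MS_card[OF QR_finite[of R], where 'n='n] unfolding MS_def D_def by auto
    have sub: "GLball g R \<subseteq> (\<lambda>k. g ** k) ` MS"
    proof
      fix h assume "h \<in> GLball g R"
      hence d: "dGL g h \<le> R" unfolding GLball_def by simp
      have "matrix_inv g ** h \<in> MS" unfolding MS_def using entry_in_QR[OF d] by simp
      thus "h \<in> (\<lambda>k. g ** k) ` MS" using matrix_inv_cancel[OF g, of h] by force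
    qed
    show "finite (GLball g R)" using sub ms(1) finite_subset by blast
    have "card (GLball g R) \<le> card ((\<lambda>k. g ** k) ` MS)" using sub ms(1) by (simp add: card_mono)
    also have "\<dots> \<le> card MS" by (rule card_image_le[OF ms(1)])
    also have "\<dots> \<le> card (QR R) ^ D" by (rule ms(2))
    finally have "real (card (GLball g R)) \<le> real (card (QR R)) ^ D"
      by (metis of_nat_le_iff of_nat_power)
    also have "\<dots> \<le> (3 * exp (4 * R)) ^ D" by (rule power_mono[OF QR_card[OF R]]) simp
    also have "\<dots> = 3 ^ D * exp (real D * (4 * R))" by (simp add: power_mult_distrib exp_of_nat_mult)
    also have "\<dots> \<le> C * exp (C * R)"
    proof (rule mult_mono)
      show "exp (real D * (4 * R)) \<le> exp (C * R)" using C2 R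
        by (simp add: mult.assoc[symmetric] mult_right_mono mult.commute[of "real D" 4])
    qed (use C1 Cpos in auto)
    finally show "real (card (GLball g R)) \<le> C * exp (C * R)" .
  qed (rule Cpos)
qed

end
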